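(* Let $A=(a_{kl})$ be an $n\times n$ matrix with entries in $\{0,1,2,\dots\}\cup\{\infty\}$ and no zeros on the diagonal. Let $i\neq j$ be indices with $a_{ji}\neq 0$. Let $A'$ be obtained from $A$ by replacing column $i$ with $(a_{1i}+a_{1j},\dots,a_{ni}+a_{nj})^T$ and then subtracting $1$ from the $(j,i)$ entry, so that the new $(j,i)$ entry is $a_{ji}+a_{jj}-1$. All other columns are unchanged. Then $A\sim_M A'$. Moreover: - $A'$ has no zeros on the diagonal; - if $A$ is irreducible, so is $A'$; - if the top-left $m\times m$ corner of $A$ is irreducible, so is the top-left $m\times m$ corner of $A'$.
   Context: Arithmetic conventions: $\infty+a=\infty$ and $\infty-1=\infty$. For a finite index set $X$ and an $X\times X$ matrix $A$ with entries in $\{0,1,2,\dots\}\cup\{\infty\}$, $G_A$ is the graph with vertex set $X$ and exactly $A(x,y)$ edges from $x$ to $y$. A matrix $A$ is irreducible if $G_A$ is strongly connected. For matrices, $A\sim_M B$ means $G_A\sim_M G_B$. A graph $G=(G^0,G^1,r,s)$ may have multiple edges and loops. A source receives no edges, a sink emits no edges, and an infinite emitter emits infinitely many edges. A vertex is singular if it is a sink or infinite emitter, and regular otherwise. Move-equivalence $\sim_M$ is the smallest equivalence relation on graphs with finitely many vertices such that $G\sim_M E$ whenever $E$ is isomorphic to a graph obtained from $G$ by one of the following moves. (S) Delete a regular source together with the edges it emits. (R) For a regular vertex $u$ emitting exactly one edge $f$, with $r(f)\neq u$, and all of whose incoming edges have the same source $v$: delete $u$, $f$ and the edges into $u$, and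 add for each $e\in r^{-1}(u)$ an edge $[ef]$ from $v$ to $r(f)$. (O) Out-splitting at a non-sink $v$ along a partition $\mathcal E_1,\dots,\mathcal E_n$ of $s^{-1}(v)$ with at most one infinite part. Replace $v$ by $v^1,\dots,v^n$. Each edge $e$ into $v$ becomes copies $e^1,\dots,e^n$ with $r(e^i)=v^i$ and source $s(e)$, or source $v^j$ if $s(e)=v$ and $e\in\mathcal E_j$. An edge from $v$ to $w\neq v$ lying in $\mathcal E_i$ gets source $v^i$. (I) In-splitting at a regular non-source $v$ along a partition $\mathcal E_1,\dots,\mathcal E_n$ of $r^{-1}(v)$. Replace $v$ by $v^1,\dots,v^n$. Each edge $e$ out of $v$ becomes copies $e^1,\dots,e^n$ with $s(e^i)=v^i$ and range $r(e)$, or range $v^j$ if $r(e)=v$ and $e\in\mathcal E_j$. An edge into $v$ from $w\neq v$ lying in $\mathcal E_i$ gets range $v^i$. *)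

theory Defs
  imports Main "HOL-Library.Extended_Nat"
begin

record ('v, 'e) graph =
  verts :: "'v set"
  edges :: "'e set"
  rng   :: "'e \<Rightarrow> 'v"
  src   :: "'e \<Rightarrow> 'v"

definition wf_graph :: "('v, 'e) graph \<Rightarrow> bool" where
  "wf_graph G \<longleftrightarrow> finite (verts G) \<and>
     (\<forall>e\<in>edges G. rng G e \<in> verts G \<and> src G e \<in> verts G)"

definition emits :: "('v, 'e) graph \<Rightarrow> 'v \<Rightarrow> 'e set" where
  "emits G v = {e \<in> edges G. src G e = v}"

definition receives :: "('v, 'e) graph \<Rightarrow> 'v \<Rightarrow> 'e set" where
  "receives G v = {e \<in> edges G. rng G e = v}"

definition is_source :: "('v, 'e) graph \<Rightarrow> 'v \<Rightarrow> bool" where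
  "is_source G v \<longleftrightarrow> receives G v = {}"

definition is_sink :: "('v, 'e) graph \<Rightarrow> 'v \<Rightarrow> bool" where
  "is_sink G v \<longleftrightarrow> emits G v = {}"

definition is_regular :: "('v, 'e) graph \<Rightarrow> 'v \<Rightarrow> bool" where
  "is_regular G v \<longleftrightarrow> v \<in> verts G \<and> emits G v \<noteq> {} \<and> finite (emits G v)"

definition graph_iso :: "('v, 'e) graph \<Rightarrow> ('w, 'f) graph \<Rightarrow> bool" where
  "graph_iso G H \<longleftrightarrow> (\<exists>\<phi> \<psi>. bij_betw \<phi> (verts G) (verts H) \<and> bij_betw \<psi> (edges G) (edges H) \<and>
      (\<forall>e\<in>edges G. rng H (\<psi> e) = \<phi> (rng G e) \<and> src H (\<psi> e) = \<phi> (src G e)))"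

definition move_S_ok :: "('v, 'e) graph \<Rightarrow> 'v \<Rightarrow> bool" where
  "move_S_ok G u \<longleftrightarrow> is_regular G u \<and> is_source G u"

definition move_S :: "('v, 'e) graph \<Rightarrow> 'v \<Rightarrow> ('v, 'e) graph" where
  "move_S G u = \<lparr>verts = verts G - {u}, edges = edges G - emits G u,
                  rng = rng G, src = src G\<rparr>"

definition move_R_ok :: "('v, 'e) graph \<Rightarrow> 'v \<Rightarrow> 'e \<Rightarrow> 'v \<Rightarrow> bool" where
  "move_R_ok G u f v \<longleftrightarrow> is_regular G u \<and> emits G u = {f} \<and> rng G f \<noteq> u \<and>
     v \<in> verts G \<and> (\<forall>e\<in>receives G u. src G e = v)"

(* old edges are tagged Inl; the new edge [ef] for e into u is Inr e *)
definition move_R :: "('v, 'e) graph \<Rightarrow> 'v \<Rightarrow> 'e \<Rightarrow> 'v \<Rightarrow> ('v, 'e + 'e) graph" where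
  "move_R G u f v = \<lparr>verts = verts G - {u},
     edges = Inl ` (edges G - {f} - receives G u) \<union> Inr ` receives G u,
     rng = (\<lambda>x. case x of Inl e \<Rightarrow> rng G e | Inr e \<Rightarrow> rng G f),
     src = (\<lambda>x. case x of Inl e \<Rightarrow> src G e | Inr e \<Rightarrow> v)\<rparr>"

definition is_partition :: "'e set \<Rightarrow> nat \<Rightarrow> ('e \<Rightarrow> nat) \<Rightarrow> bool" where
  "is_partition S n p \<longleftrightarrow> 1 \<le> n \<and> (\<forall>e\<in>S. p e < n) \<and> (\<forall>i<n. {e\<in>S. p e = i} \<noteq> {})"

(* (O): out-splitting; the old vertex w \<noteq> v becomes (w,0), v becomes v^i = (v,i);
   an edge e not into v becomes (e,0), an edge e into v has copies (e,i), i<n *)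
definition move_O_ok :: "('v, 'e) graph \<Rightarrow> 'v \<Rightarrow> nat \<Rightarrow> ('e \<Rightarrow> nat) \<Rightarrow> bool" where
  "move_O_ok G v n p \<longleftrightarrow> v \<in> verts G \<and> \<not> is_sink G v \<and> is_partition (emits G v) n p \<and>
     (\<forall>i<n. \<forall>j<n. infinite {e\<in>emits G v. p e = i} \<and> infinite {e\<in>emits G v. p e = j} \<longrightarrow> i = j)"

definition move_O :: "('v, 'e) graph \<Rightarrow> 'v \<Rightarrow> nat \<Rightarrow> ('e \<Rightarrow> nat) \<Rightarrow> ('v \<times> nat, 'e \<times> nat) graph" where
  "move_O G v n p = \<lparr>verts = (\<lambda>w. (w, 0)) ` (verts G - {v}) \<union> {(v, i) | i. i < n},
     edges = {(e, 0) | e. e \<in> edges G \<and> rng G e \<noteq> v} \<union> {(e, i) | e i. e \<in> edges G \<and> rng G e = v \<and> i < n},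
     rng = (\<lambda>(e, i). if rng G e = v then (v, i) else (rng G e, 0)),
     src = (\<lambda>(e, i). if src G e = v then (v, p e) else (src G e, 0))\<rparr>"

definition move_I_ok :: "('v, 'e) graph \<Rightarrow> 'v \<Rightarrow> nat \<Rightarrow> ('e \<Rightarrow> nat) \<Rightarrow> bool" where
  "move_I_ok G v n p \<longleftrightarrow> is_regular G v \<and> \<not> is_source G v \<and> is_partition (receives G v) n p"

definition move_I :: "('v, 'e) graph \<Rightarrow> 'v \<Rightarrow> nat \<Rightarrow> ('e \<Rightarrow> nat) \<Rightarrow> ('v \<times> nat, 'e \<times> nat) graph" where
  "move_I G v n p = \<lparr>verts = (\<lambda>w. (w, 0)) ` (verts G - {v}) \<union> {(v, i) | i. i < n},
     edges = {(e, 0) | e. e \<in> edges G \<and> src G e \<noteq> v} \<union> {(e, i) | e i. e \<in> edges G \<and> src G e = v \<and> i < n},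
     rng = (\<lambda>(e, i). if rng G e = v then (v, p e) else (rng G e, 0)),
     src = (\<lambda>(e, i). if src G e = v then (v, i) else (src G e, 0))\<rparr>"

type_synonym ugraph = "(nat, nat) graph"

definition move_step :: "ugraph \<Rightarrow> ugraph \<Rightarrow> bool" where
  "move_step G E \<longleftrightarrow> wf_graph G \<and> wf_graph E \<and>
    ((\<exists>u. move_S_ok G u \<and> graph_iso (move_S G u) E) \<or>
     (\<exists>u f v. move_R_ok G u f v \<and> graph_iso (move_R G u f v) E) \<or>
     (\<exists>v n p. move_O_ok G v n p \<and> graph_iso (move_O G v n p) E) \<or>
     (\<exists>v n p. move_I_ok G v n p \<and> graph_iso (move_I G v n p) E))"

definition move_equiv :: "ugraph \<Rightarrow> ugraph \<Rightarrow> bool" where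
  "move_equiv = (sup move_step move_step\<inverse>\<inverse>)\<^sup>*\<^sup>*"

(* an n\<times>n matrix over {0,1,2,...,\<infinity>} indexed by {..<n}; entries outside are ignored *)
definition matrix_graph :: "nat \<Rightarrow> (nat \<Rightarrow> nat \<Rightarrow> enat) \<Rightarrow> (nat, nat \<times> nat \<times> nat) graph" where
  "matrix_graph n A = \<lparr>verts = {..<n},
     edges = {(x, y, k). x < n \<and> y < n \<and> enat k < A x y},
     rng = (\<lambda>(x, y, k). y), src = (\<lambda>(x, y, k). x)\<rparr>"

definition mat_move_equiv :: "nat \<Rightarrow> (nat \<Rightarrow> nat \<Rightarrow> enat) \<Rightarrow> (nat \<Rightarrow> nat \<Rightarrow> enat) \<Rightarrow> bool" where
  "mat_move_equiv n A B \<longleftrightarrow> (\<exists>G E. wf_graph G \<and> wf_graph E \<and>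
      graph_iso (matrix_graph n A) G \<and> graph_iso (matrix_graph n B) E \<and> move_equiv G E)"

definition strongly_connected :: "('v, 'e) graph \<Rightarrow> bool" where
  "strongly_connected G \<longleftrightarrow> (\<forall>x\<in>verts G. \<forall>y\<in>verts G.
      (\<lambda>a b. \<exists>e\<in>edges G. src G e = a \<and> rng G e = b)\<^sup>*\<^sup>* x y)"

definition irreducible_mat :: "nat \<Rightarrow> (nat \<Rightarrow> nat \<Rightarrow> enat) \<Rightarrow> bool" where
  "irreducible_mat n A \<longleftrightarrow> strongly_connected (matrix_graph n A)"

definition col_op :: "(nat \<Rightarrow> nat \<Rightarrow> enat) \<Rightarrow> nat \<Rightarrow> nat \<Rightarrow> (nat \<Rightarrow> nat \<Rightarrow> enat)" where
  "col_op A i j = (\<lambda>k l. if l = i then (if k = j then A k i + A k j - 1 else A k i + A k j) else A k l)"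

end

theory Submission
  imports Defs "HOL-Library.Countable_Set"
begin

definition esz :: "'a set \<Rightarrow> enat" where
  "esz S = (if finite S then enat (card S) else \<infinity>)"

lemma esz_image: "inj_on h S \<Longrightarrow> esz (h ` S) = esz S"
  by (auto simp: esz_def finite_image_iff card_image)

lemma esz_Un: "S \<inter> T = {} \<Longrightarrow> esz (S \<union> T) = esz S + esz T"
  by (auto simp: esz_def card_Un_disjoint)

lemma esz_empty[simp]: "esz {} = 0"
  by (simp add: esz_def zero_enat_def)

lemma esz_single[simp]: "esz {x} = 1"
  by (simp add: esz_def one_enat_def)

lemma esz_lt: "esz {c. enat c < a} = a"
proof (cases a)
  case (enat k)
  then have "{c. enat c < a} = {..<k}" by auto
  then show ?thesis using enat by (simp add: esz_def)
next
  case infinity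
  then have "{c. enat c < a} = UNIV" by auto
  then show ?thesis using infinity by (simp add: esz_def)
qed

lemma esz_lt_pos: "esz {c. c \<noteq> 0 \<and> enat c < a} = a - 1"
proof -
  have "{c. c \<noteq> 0 \<and> enat c < a} = Suc ` {c. enat c < a - 1}"
  proof (cases a)
    case (enat k)
    show ?thesis
    proof (rule set_eqI)
      fix x
      show "x \<in> {c. c \<noteq> 0 \<and> enat c < a} \<longleftrightarrow> x \<in> Suc ` {c. enat c < a - 1}"
      proof
        assume "x \<in> {c. c \<noteq> 0 \<and> enat c < a}"
        then have "x \<noteq> 0" "x < k" using enat by auto
        then have "x = Suc (x - 1)" "enat (x - 1) < a - 1" using enat by (auto simp: one_enat_def)
        then show "x \<in> Suc ` {c. enat c < a - 1}" by blast
      next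
        assume "x \<in> Suc ` {c. enat c < a - 1}"
        then obtain c where "x = Suc c" "c < k - 1" using enat by (auto simp: one_enat_def)
        then show "x \<in> {c. c \<noteq> 0 \<and> enat c < a}" using enat by auto
      qed
    qed
  next
    case infinity
    have "x \<in> Suc ` {c. enat c < a - 1}" if "x \<noteq> 0" for x
    proof -
      have "x = Suc (x - 1)" using that by simp
      then show ?thesis using infinity by (intro image_eqI[of _ _ "x - 1"]) auto
    qed
    then show ?thesis using infinity by auto
  qed
  then show ?thesis by (simp add: esz_image esz_lt)
qed

lemma esz_bij:
  fixes S :: "'a::countable set" and T :: "'b::countable set"
  assumes "esz S = esz T"
  shows "\<exists>g. bij_betw g S T"
proof (cases "finite S")
  case True
  then have "finite T" "card S = card T" using assms by (auto simp: esz_def split: if_splits)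
  then show ?thesis using True finite_same_card_bij by blast
next
  case False
  then have "infinite T" using assms by (auto simp: esz_def split: if_splits)
  have b1: "bij_betw (from_nat_into S) UNIV S" using False by (simp add: bij_betw_from_nat_into)
  have b2: "bij_betw (from_nat_into T) UNIV T" using \<open>infinite T\<close> by (simp add: bij_betw_from_nat_into)
  have "bij_betw (from_nat_into T \<circ> inv_into UNIV (from_nat_into S)) S T"
    using bij_betw_trans[OF bij_betw_inv_into[OF b1] b2] .
  then show ?thesis by blast
qed

lemma iso_by_counts:
  fixes G :: "('v,'e::countable) graph" and H :: "('w,'f::countable) graph"
  assumes wfG: "wf_graph G" and wfH: "wf_graph H"
    and bij: "bij_betw \<phi> (verts G) (verts H)"
    and cnt: "\<And>a b. a \<in> verts H \<Longrightarrow> b \<in> verts H \<Longrightarrow>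
       esz {e\<in>edges G. \<phi> (src G e) = a \<and> \<phi> (rng G e) = b} = esz {e\<in>edges H. src H e = a \<and> rng H e = b}"
  shows "graph_iso G H"
proof -
  define P where "P a b = {e\<in>edges G. \<phi> (src G e) = a \<and> \<phi> (rng G e) = b}" for a b
  define Q where "Q a b = {e\<in>edges H. src H e = a \<and> rng H e = b}" for a b
  have "\<forall>a\<in>verts H. \<forall>b\<in>verts H. \<exists>g. bij_betw g (P a b) (Q a b)"
    using cnt esz_bij unfolding P_def Q_def by blast
  then obtain g where g: "\<And>a b. a\<in>verts H \<Longrightarrow> b\<in>verts H \<Longrightarrow> bij_betw (g a b) (P a b) (Q a b)"
    by metis
  define \<psi> where "\<psi> e = g (\<phi> (src G e)) (\<phi> (rng G e)) e" for e
  have inV: "\<phi> (src G e) \<in> verts H" "\<phi> (rng G e) \<in> verts H" if "e \<in> edges G" for e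
    using that wfG bij unfolding wf_graph_def bij_betw_def by auto
  have inP: "e \<in> P (\<phi> (src G e)) (\<phi> (rng G e))" if "e \<in> edges G" for e
    using that unfolding P_def by auto
  have inQ: "\<psi> e \<in> Q (\<phi> (src G e)) (\<phi> (rng G e))" if "e \<in> edges G" for e
    using g[OF inV[OF that]] inP[OF that] unfolding \<psi>_def bij_betw_def by auto
  have "inj_on \<psi> (edges G)"
  proof (rule inj_onI)
    fix x y assume x: "x \<in> edges G" and y: "y \<in> edges G" and e: "\<psi> x = \<psi> y"
    have "\<phi> (src G x) = \<phi> (src G y) \<and> \<phi> (rng G x) = \<phi> (rng G y)"
      using inQ[OF x] inQ[OF y] e unfolding Q_def by auto
    then have "\<psi> y = g (\<phi> (src G x)) (\<phi> (rng G x)) y" unfolding \<psi>_def by simp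
    moreover have "y \<in> P (\<phi> (src G x)) (\<phi> (rng G x))"
      using inP[OF y] \<open>\<phi> (src G x) = _ \<and> _\<close> by simp
    ultimately show "x = y"
      using g[OF inV[OF x]] inP[OF x] e unfolding \<psi>_def bij_betw_def inj_on_def by metis
  qed
  moreover have "\<psi> ` edges G = edges H"
  proof
    show "\<psi> ` edges G \<subseteq> edges H" using inQ unfolding Q_def by auto
    show "edges H \<subseteq> \<psi> ` edges G"
    proof
      fix f assume f: "f \<in> edges H"
      let ?a = "src H f" and ?b = "rng H f"
      have ab: "?a \<in> verts H" "?b \<in> verts H" using f wfH unfolding wf_graph_def by auto
      have "f \<in> Q ?a ?b" using f unfolding Q_def by auto
      then have "f \<in> g ?a ?b ` P ?a ?b" using g[OF ab] bij_betw_imp_surj_on by metis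
      then obtain e where e: "e \<in> P ?a ?b" "g ?a ?b e = f" by (auto simp: image_iff)
      then have "\<psi> e = f" "e \<in> edges G" unfolding \<psi>_def P_def by auto
      then show "f \<in> \<psi> ` edges G" by auto
    qed
  qed
  moreover have "\<forall>e\<in>edges G. rng H (\<psi> e) = \<phi> (rng G e) \<and> src H (\<psi> e) = \<phi> (src G e)"
    using inQ unfolding Q_def by auto
  ultimately show ?thesis using bij unfolding graph_iso_def bij_betw_def by blast
qed

lemma iso_inj:
  assumes "inj \<Phi>" "inj \<Psi>" "\<Phi> ` verts G = verts H" "\<Psi> ` edges G = edges H"
    "\<And>e. e\<in>edges G \<Longrightarrow> rng H (\<Psi> e) = \<Phi> (rng G e) \<and> src H (\<Psi> e) = \<Phi> (src G e)"
  shows "graph_iso G H"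
  unfolding graph_iso_def bij_betw_def using assms by (metis inj_on_subset subset_UNIV)

lemma iso_trans:
  assumes "graph_iso G H" "graph_iso H K" shows "graph_iso G K"
proof -
  obtain \<phi> \<psi> where a: "bij_betw \<phi> (verts G) (verts H)" "bij_betw \<psi> (edges G) (edges H)"
    "\<forall>e\<in>edges G. rng H (\<psi> e) = \<phi> (rng G e) \<and> src H (\<psi> e) = \<phi> (src G e)"
    using assms(1) unfolding graph_iso_def by blast
  obtain \<phi>' \<psi>' where b: "bij_betw \<phi>' (verts H) (verts K)" "bij_betw \<psi>' (edges H) (edges K)"
    "\<forall>e\<in>edges H. rng K (\<psi>' e) = \<phi>' (rng H e) \<and> src K (\<psi>' e) = \<phi>' (src H e)"
    using assms(2) unfolding graph_iso_def by blast
  have "bij_betw (\<phi>' \<circ> \<phi>) (verts G) (verts K)" "bij_betw (\<psi>' \<circ> \<psi>) (edges G) (edges K)"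
    using a b bij_betw_trans by blast+
  moreover have "\<forall>e\<in>edges G. rng K ((\<psi>' \<circ> \<psi>) e) = (\<phi>' \<circ> \<phi>) (rng G e) \<and> src K ((\<psi>' \<circ> \<psi>) e) = (\<phi>' \<circ> \<phi>) (src G e)"
  proof
    fix e assume e: "e \<in> edges G"
    then have "\<psi> e \<in> edges H" using a(2) bij_betw_apply by metis
    then show "rng K ((\<psi>' \<circ> \<psi>) e) = (\<phi>' \<circ> \<phi>) (rng G e) \<and> src K ((\<psi>' \<circ> \<psi>) e) = (\<phi>' \<circ> \<phi>) (src G e)"
      using a(3) b(3) e by auto
  qed
  ultimately show ?thesis unfolding graph_iso_def by blast
qed

lemma iso_sym:
  assumes "graph_iso G H" "wf_graph G" shows "graph_iso H G"
proof -
  obtain \<phi> \<psi> where a: "bij_betw \<phi> (verts G) (verts H)" "bij_betw \<psi> (edges G) (edges H)"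
    "\<forall>e\<in>edges G. rng H (\<psi> e) = \<phi> (rng G e) \<and> src H (\<psi> e) = \<phi> (src G e)"
    using assms(1) unfolding graph_iso_def by blast
  let ?p = "inv_into (verts G) \<phi>" and ?q = "inv_into (edges G) \<psi>"
  have "bij_betw ?p (verts H) (verts G)" "bij_betw ?q (edges H) (edges G)"
    using a bij_betw_inv_into by blast+
  moreover have "\<forall>e\<in>edges H. rng G (?q e) = ?p (rng H e) \<and> src G (?q e) = ?p (src H e)"
  proof
    fix e assume e: "e \<in> edges H"
    have q: "?q e \<in> edges G" "\<psi> (?q e) = e" using a(2) e
      by (auto simp: bij_betw_def inv_into_into f_inv_into_f)
    have "rng G (?q e) \<in> verts G" "src G (?q e) \<in> verts G" using q assms(2) unfolding wf_graph_def by auto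
    then show "rng G (?q e) = ?p (rng H e) \<and> src G (?q e) = ?p (src H e)"
      using a(1) a(3) q by (metis bij_betw_inv_into_left)
  qed
  ultimately show ?thesis unfolding graph_iso_def by blast
qed

lemma iso_refl: "graph_iso G G"
  unfolding graph_iso_def by (rule exI[of _ id], rule exI[of _ id]) auto

lemma wf_iso: assumes "wf_graph G" "graph_iso G H" shows "wf_graph H"
proof -
  obtain \<phi> \<psi> where a: "bij_betw \<phi> (verts G) (verts H)" "bij_betw \<psi> (edges G) (edges H)"
    "\<forall>e\<in>edges G. rng H (\<psi> e) = \<phi> (rng G e) \<and> src H (\<psi> e) = \<phi> (src G e)"
    using assms(2) unfolding graph_iso_def by blast
  have "finite (verts H)" using assms(1) a(1) unfolding wf_graph_def bij_betw_def by (metis finite_imageI)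
  moreover have "rng H f \<in> verts H \<and> src H f \<in> verts H" if f: "f \<in> edges H" for f
  proof -
    obtain e where e: "e \<in> edges G" "f = \<psi> e" using a(2) f unfolding bij_betw_def by auto
    then have "rng G e \<in> verts G" "src G e \<in> verts G" using assms(1) unfolding wf_graph_def by auto
    then show ?thesis using a(1) a(3) e by (metis bij_betw_apply)
  qed
  ultimately show ?thesis unfolding wf_graph_def by auto
qed


definition enc :: "('v::countable,'e::countable) graph \<Rightarrow> ugraph" where
  "enc H = \<lparr>verts = to_nat ` verts H, edges = to_nat ` edges H,
     rng = (\<lambda>e. to_nat (rng H (from_nat e))), src = (\<lambda>e. to_nat (src H (from_nat e)))\<rparr>"

lemma enc_simps[simp]:
  "verts (enc H) = to_nat ` verts H" "edges (enc H) = to_nat ` edges H"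
  "rng (enc H) (to_nat e) = to_nat (rng H e)" "src (enc H) (to_nat e) = to_nat (src H e)"
  by (auto simp: enc_def)

lemma enc_iso: "graph_iso H (enc H)"
  by (rule iso_inj[where \<Phi>=to_nat and \<Psi>=to_nat]) auto

lemma enc_wf: "wf_graph H \<Longrightarrow> wf_graph (enc H)"
  using wf_iso enc_iso by blast

lemma enc_emits: "emits (enc H) (to_nat v) = to_nat ` emits H v"
  by (auto simp: emits_def)

lemma enc_receives: "receives (enc H) (to_nat v) = to_nat ` receives H v"
  by (auto simp: receives_def)

lemma enc_part: "{e\<in>to_nat ` S. (p \<circ> from_nat) e = i} = to_nat ` {e\<in>S. p e = i}"
  by auto

lemma enc_part': "{e\<in>to_nat ` S. p (from_nat e) = i} = to_nat ` {e\<in>S. p e = i}"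
  by auto

lemma enc_partition: "is_partition S n p \<Longrightarrow> is_partition (to_nat ` S) n (p \<circ> from_nat)"
  unfolding is_partition_def by (auto simp: enc_part)

lemma fin_to_nat: "finite (to_nat ` S) \<longleftrightarrow> finite S"
  by (simp add: finite_image_iff)

lemma enc_regular: "is_regular H v \<Longrightarrow> is_regular (enc H) (to_nat v)"
  unfolding is_regular_def enc_emits by (auto simp: fin_to_nat)

lemma O_ok_transfer:
  assumes "move_O_ok H v n p"
  shows "move_O_ok (enc H) (to_nat v) n (p \<circ> from_nat)"
  using assms unfolding move_O_ok_def is_sink_def enc_emits
  by (auto simp: enc_partition enc_part enc_part' fin_to_nat)

lemma I_ok_transfer:
  assumes "move_I_ok H v n p"
  shows "move_I_ok (enc H) (to_nat v) n (p \<circ> from_nat)"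
  using assms unfolding move_I_ok_def is_source_def enc_receives
  by (auto simp: enc_partition enc_regular)

lemma R_ok_transfer:
  assumes "move_R_ok H u f v"
  shows "move_R_ok (enc H) (to_nat u) (to_nat f) (to_nat v)"
  using assms unfolding move_R_ok_def enc_receives
  by (auto simp: enc_regular enc_emits)

lemma pair_set: "{(v,i)|i. i<(n::nat)} = Pair v ` {..<n}"
  by auto

lemma to_nat_diff: "to_nat ` (A - B) = to_nat ` A - to_nat ` B"
  by (rule image_set_diff) simp

lemma to_nat_diff1: "to_nat ` A - {to_nat v} = to_nat ` (A - {v})"
  using to_nat_diff[of A "{v}"] by simp

lemma to_nat_diff2: "to_nat ` A - {to_nat v} - to_nat ` B = to_nat ` (A - {v} - B)"
  using to_nat_diff[of "A - {v}" B] to_nat_diff1[of A v] by simp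

lemma O_iso_transfer:
  "graph_iso (move_O H v n p) (move_O (enc H) (to_nat v) n (p \<circ> from_nat))"
proof (rule iso_inj[where \<Phi>="map_prod to_nat id" and \<Psi>="map_prod to_nat id"])
  show "inj (map_prod to_nat (id::nat\<Rightarrow>nat))" by (rule prod.inj_map) (auto simp: inj_on_def)
  show "inj (map_prod to_nat (id::nat\<Rightarrow>nat))" by (rule prod.inj_map) (auto simp: inj_on_def)
  show "map_prod to_nat id ` verts (move_O H v n p) = verts (move_O (enc H) (to_nat v) n (p \<circ> from_nat))"
    by (simp add: move_O_def pair_set image_Un image_image to_nat_diff1 to_nat_diff2)
  show "map_prod to_nat id ` edges (move_O H v n p) = edges (move_O (enc H) (to_nat v) n (p \<circ> from_nat))"
    apply (auto simp: move_O_def image_iff)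
     apply (rule_tac x="(x,0)" in bexI; force)
    apply (rule_tac x="(x,b)" in bexI; force)
    done
  show "rng (move_O (enc H) (to_nat v) n (p \<circ> from_nat)) (map_prod to_nat id e) = map_prod to_nat id (rng (move_O H v n p) e) \<and>
        src (move_O (enc H) (to_nat v) n (p \<circ> from_nat)) (map_prod to_nat id e) = map_prod to_nat id (src (move_O H v n p) e)"
    if "e \<in> edges (move_O H v n p)" for e
    by (cases e) (auto simp: move_O_def)
qed

lemma I_iso_transfer:
  "graph_iso (move_I H v n p) (move_I (enc H) (to_nat v) n (p \<circ> from_nat))"
proof (rule iso_inj[where \<Phi>="map_prod to_nat id" and \<Psi>="map_prod to_nat id"])
  show "inj (map_prod to_nat (id::nat\<Rightarrow>nat))" by (rule prod.inj_map) (auto simp: inj_on_def)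
  show "inj (map_prod to_nat (id::nat\<Rightarrow>nat))" by (rule prod.inj_map) (auto simp: inj_on_def)
  show "map_prod to_nat id ` verts (move_I H v n p) = verts (move_I (enc H) (to_nat v) n (p \<circ> from_nat))"
    by (simp add: move_I_def pair_set image_Un image_image to_nat_diff1 to_nat_diff2)
  show "map_prod to_nat id ` edges (move_I H v n p) = edges (move_I (enc H) (to_nat v) n (p \<circ> from_nat))"
    apply (auto simp: move_I_def image_iff)
     apply (rule_tac x="(x,0)" in bexI; force)
    apply (rule_tac x="(x,b)" in bexI; force)
    done
  show "rng (move_I (enc H) (to_nat v) n (p \<circ> from_nat)) (map_prod to_nat id e) = map_prod to_nat id (rng (move_I H v n p) e) \<and>
        src (move_I (enc H) (to_nat v) n (p \<circ> from_nat)) (map_prod to_nat id e) = map_prod to_nat id (src (move_I H v n p) e)"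
    if "e \<in> edges (move_I H v n p)" for e
    by (cases e) (auto simp: move_I_def)
qed

lemma R_iso_transfer:
  "graph_iso (move_R H u f v) (move_R (enc H) (to_nat u) (to_nat f) (to_nat v))"
proof (rule iso_inj[where \<Phi>="to_nat" and \<Psi>="map_sum to_nat to_nat"])
  show "inj (to_nat :: 'a \<Rightarrow> nat)" by simp
  show "inj (map_sum to_nat to_nat)" by (rule sum.inj_map) auto
  show "to_nat ` verts (move_R H u f v) = verts (move_R (enc H) (to_nat u) (to_nat f) (to_nat v))"
    by (auto simp: move_R_def image_iff)
  show "map_sum to_nat to_nat ` edges (move_R H u f v) = edges (move_R (enc H) (to_nat u) (to_nat f) (to_nat v))"
    by (simp add: move_R_def image_Un image_image to_nat_diff1 to_nat_diff2 enc_receives)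
      (simp add: to_nat_diff[symmetric] image_image)
  show "rng (move_R (enc H) (to_nat u) (to_nat f) (to_nat v)) (map_sum to_nat to_nat e) = to_nat (rng (move_R H u f v) e) \<and>
        src (move_R (enc H) (to_nat u) (to_nat f) (to_nat v)) (map_sum to_nat to_nat e) = to_nat (src (move_R H u f v) e)"
    if "e \<in> edges (move_R H u f v)" for e
    by (cases e) (auto simp: move_R_def)
qed


lemma wf_move_O:
  assumes "wf_graph G" "move_O_ok G v n p" shows "wf_graph (move_O G v n p)"
proof -
  have fin: "finite (verts (move_O G v n p))"
    using assms(1) by (simp add: move_O_def pair_set wf_graph_def)
  have "\<forall>e\<in>edges (move_O G v n p). rng (move_O G v n p) e \<in> verts (move_O G v n p) \<and> src (move_O G v n p) e \<in> verts (move_O G v n p)"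
  proof
    fix x assume "x \<in> edges (move_O G v n p)"
    then obtain e k where x: "x = (e,k)" "e \<in> edges G" "rng G e \<noteq> v \<and> k = 0 \<or> rng G e = v \<and> k < n"
      by (auto simp: move_O_def)
    have r: "rng G e \<in> verts G" "src G e \<in> verts G" using assms(1) x(2) unfolding wf_graph_def by auto
    have "src G e = v \<Longrightarrow> p e < n" using assms(2) x(2) unfolding move_O_ok_def is_partition_def emits_def by auto
    then show "rng (move_O G v n p) x \<in> verts (move_O G v n p) \<and> src (move_O G v n p) x \<in> verts (move_O G v n p)"
      using x r by (auto simp: move_O_def)
  qed
  with fin show ?thesis unfolding wf_graph_def by blast
qed

lemma wf_move_I:
  assumes "wf_graph G" "move_I_ok G v n p" shows "wf_graph (move_I G v n p)"
proof -
  have fin: "finite (verts (move_I G v n p))"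
    using assms(1) by (simp add: move_I_def pair_set wf_graph_def)
  have "\<forall>e\<in>edges (move_I G v n p). rng (move_I G v n p) e \<in> verts (move_I G v n p) \<and> src (move_I G v n p) e \<in> verts (move_I G v n p)"
  proof
    fix x assume "x \<in> edges (move_I G v n p)"
    then obtain e k where x: "x = (e,k)" "e \<in> edges G" "src G e \<noteq> v \<and> k = 0 \<or> src G e = v \<and> k < n"
      by (auto simp: move_I_def)
    have r: "rng G e \<in> verts G" "src G e \<in> verts G" using assms(1) x(2) unfolding wf_graph_def by auto
    have "rng G e = v \<Longrightarrow> p e < n" using assms(2) x(2) unfolding move_I_ok_def is_partition_def receives_def by auto
    then show "rng (move_I G v n p) x \<in> verts (move_I G v n p) \<and> src (move_I G v n p) x \<in> verts (move_I G v n p)"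
      using x r by (auto simp: move_I_def)
  qed
  with fin show ?thesis unfolding wf_graph_def by blast
qed

lemma wf_move_R:
  assumes "wf_graph G" "move_R_ok G u f v" shows "wf_graph (move_R G u f v)"
proof -
  have fin: "finite (verts (move_R G u f v))"
    using assms(1) by (simp add: move_R_def wf_graph_def)
  have f: "f \<in> edges G" "src G f = u" "rng G f \<noteq> u" "rng G f \<in> verts G"
    using assms unfolding move_R_ok_def emits_def wf_graph_def by auto
  have "\<forall>e\<in>edges (move_R G u f v). rng (move_R G u f v) e \<in> verts (move_R G u f v) \<and> src (move_R G u f v) e \<in> verts (move_R G u f v)"
  proof
    fix x assume x: "x \<in> edges (move_R G u f v)"
    show "rng (move_R G u f v) x \<in> verts (move_R G u f v) \<and> src (move_R G u f v) x \<in> verts (move_R G u f v)"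
    proof (cases x)
      case (Inl e)
      then have e: "e \<in> edges G" "e \<noteq> f" "rng G e \<noteq> u" using x by (auto simp: move_R_def receives_def)
      then have "src G e \<noteq> u" using assms(2) unfolding move_R_ok_def emits_def by auto
      then show ?thesis using e Inl assms(1) unfolding wf_graph_def by (auto simp: move_R_def)
    next
      case (Inr e)
      then have e: "e \<in> receives G u" using x by (auto simp: move_R_def)
      then have "src G e = v" using assms(2) unfolding move_R_ok_def by auto
      moreover have "v \<noteq> u"
      proof
        assume "v = u"
        then have "e \<in> emits G u" using e \<open>src G e = v\<close> by (auto simp: emits_def receives_def)
        then have "e = f" using assms(2) unfolding move_R_ok_def by auto
        then show False using e f by (auto simp: receives_def)
      qed
      ultimately show ?thesis using Inr f assms(2) unfolding move_R_ok_def by (auto simp: move_R_def)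
    qed
  qed
  with fin show ?thesis unfolding wf_graph_def by blast
qed

lemma trivial_O_iso:
  assumes "v \<in> verts G" "\<not> is_sink G v"
  shows "move_O_ok G v 1 (\<lambda>_. 0)" "graph_iso (move_O G v 1 (\<lambda>_. 0)) G"
proof -
  show "move_O_ok G v 1 (\<lambda>_. 0)"
    using assms unfolding move_O_ok_def is_partition_def is_sink_def by auto
  have V: "verts (move_O G v 1 (\<lambda>_. 0)) = (\<lambda>w. (w, 0)) ` verts G"
    using assms(1) by (auto simp: move_O_def)
  have E: "edges (move_O G v 1 (\<lambda>_. 0)) = (\<lambda>e. (e, 0)) ` edges G"
    by (auto simp: move_O_def)
  have b1: "bij_betw fst ((\<lambda>w. (w, 0::nat)) ` S) S" for S :: "'x set"
    by (auto simp: bij_betw_def inj_on_def image_image)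
  show "graph_iso (move_O G v 1 (\<lambda>_. 0)) G"
    unfolding graph_iso_def V E
    by (rule exI[of _ fst], rule exI[of _ fst]) (auto simp: b1 move_O_def)
qed

lemma move_equiv_step: "move_step G E \<Longrightarrow> move_equiv G E"
  unfolding move_equiv_def by (rule r_into_rtranclp) simp

lemma move_equiv_trans: "move_equiv G E \<Longrightarrow> move_equiv E K \<Longrightarrow> move_equiv G K"
  unfolding move_equiv_def by (rule rtranclp_trans)

lemma iso_step:
  assumes "wf_graph G" "wf_graph E" "graph_iso G E" "e \<in> edges G"
  shows "move_step G E"
proof -
  have "src G e \<in> verts G" "\<not> is_sink G (src G e)"
    using assms(1,4) unfolding wf_graph_def is_sink_def emits_def by auto
  from trivial_O_iso[OF this] have "move_O_ok G (src G e) 1 (\<lambda>_. 0)"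
    "graph_iso (move_O G (src G e) 1 (\<lambda>_. 0)) E"
    using iso_trans[OF _ assms(3)] by blast+
  then show ?thesis using assms unfolding move_step_def by blast
qed

lemma iso_edge: "graph_iso G H \<Longrightarrow> e \<in> edges G \<Longrightarrow> \<exists>e'. e' \<in> edges H"
  unfolding graph_iso_def bij_betw_def by auto

abbreviation mg where "mg \<equiv> matrix_graph"

lemma wf_mg: "wf_graph (mg n A)"
  by (auto simp: wf_graph_def matrix_graph_def)

definition MEQ :: "nat \<Rightarrow> (nat \<Rightarrow> nat \<Rightarrow> enat) \<Rightarrow> nat \<Rightarrow> (nat \<Rightarrow> nat \<Rightarrow> enat) \<Rightarrow> bool" where
  "MEQ n A m B \<longleftrightarrow> (\<exists>G E. wf_graph G \<and> wf_graph E \<and>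
      graph_iso (mg n A) G \<and> graph_iso (mg m B) E \<and> move_equiv G E)"

lemma MEQ_step: "move_step (enc (mg n A)) (enc (mg m B)) \<Longrightarrow> MEQ n A m B"
  unfolding MEQ_def using enc_wf[OF wf_mg] enc_iso move_equiv_step by blast

lemma MEQ_O:
  assumes "move_O_ok (mg n A) v k p" "graph_iso (move_O (mg n A) v k p) (mg m B)"
  shows "MEQ n A m B"
proof (rule MEQ_step)
  let ?H = "mg n A"
  have w: "wf_graph (move_O ?H v k p)" using wf_move_O[OF wf_mg assms(1)] .
  have "graph_iso (move_O (enc ?H) (to_nat v) k (p \<circ> from_nat)) (move_O ?H v k p)"
    using iso_sym[OF O_iso_transfer w] .
  then have iso: "graph_iso (move_O (enc ?H) (to_nat v) k (p \<circ> from_nat)) (enc (mg m B))"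
    using iso_trans[OF iso_trans[OF _ assms(2)] enc_iso] by blast
  have ok': "move_O_ok (enc ?H) (to_nat v) k (p \<circ> from_nat)" using O_ok_transfer[OF assms(1)] .
  have w1: "wf_graph (enc ?H)" "wf_graph (enc (mg m B))" using enc_wf[OF wf_mg] by blast+
  show "move_step (enc ?H) (enc (mg m B))"
    unfolding move_step_def using ok' iso w1 by blast
qed

lemma MEQ_I:
  assumes "move_I_ok (mg n A) v k p" "graph_iso (move_I (mg n A) v k p) (mg m B)"
  shows "MEQ n A m B"
proof (rule MEQ_step)
  let ?H = "mg n A"
  have w: "wf_graph (move_I ?H v k p)" using wf_move_I[OF wf_mg assms(1)] .
  have "graph_iso (move_I (enc ?H) (to_nat v) k (p \<circ> from_nat)) (move_I ?H v k p)"
    using iso_sym[OF I_iso_transfer w] .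
  then have iso: "graph_iso (move_I (enc ?H) (to_nat v) k (p \<circ> from_nat)) (enc (mg m B))"
    using iso_trans[OF iso_trans[OF _ assms(2)] enc_iso] by blast
  have ok': "move_I_ok (enc ?H) (to_nat v) k (p \<circ> from_nat)" using I_ok_transfer[OF assms(1)] .
  have w1: "wf_graph (enc ?H)" "wf_graph (enc (mg m B))" using enc_wf[OF wf_mg] by blast+
  show "move_step (enc ?H) (enc (mg m B))"
    unfolding move_step_def using ok' iso w1 by blast
qed

lemma MEQ_R:
  assumes "move_R_ok (mg n A) u f v" "graph_iso (move_R (mg n A) u f v) (mg m B)"
  shows "MEQ n A m B"
proof (rule MEQ_step)
  let ?H = "mg n A"
  have w: "wf_graph (move_R ?H u f v)" using wf_move_R[OF wf_mg assms(1)] .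
  have "graph_iso (move_R (enc ?H) (to_nat u) (to_nat f) (to_nat v)) (move_R ?H u f v)"
    using iso_sym[OF R_iso_transfer w] .
  then have iso: "graph_iso (move_R (enc ?H) (to_nat u) (to_nat f) (to_nat v)) (enc (mg m B))"
    using iso_trans[OF iso_trans[OF _ assms(2)] enc_iso] by blast
  have ok': "move_R_ok (enc ?H) (to_nat u) (to_nat f) (to_nat v)" using R_ok_transfer[OF assms(1)] .
  have w1: "wf_graph (enc ?H)" "wf_graph (enc (mg m B))" using enc_wf[OF wf_mg] by blast+
  show "move_step (enc ?H) (enc (mg m B))"
    unfolding move_step_def using ok' iso w1 by blast
qed

lemma MEQ_trans:
  assumes "MEQ n A m B" "MEQ m B k C" "a < m" "b < m" "B a b \<noteq> 0"
  shows "MEQ n A k C"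
proof -
  obtain G E where 1: "wf_graph G" "wf_graph E" "graph_iso (mg n A) G" "graph_iso (mg m B) E" "move_equiv G E"
    using assms(1) unfolding MEQ_def by blast
  obtain G' E' where 2: "wf_graph G'" "wf_graph E'" "graph_iso (mg m B) G'" "graph_iso (mg k C) E'" "move_equiv G' E'"
    using assms(2) unfolding MEQ_def by blast
  have iso: "graph_iso E G'" using iso_trans[OF iso_sym[OF 1(4) wf_mg] 2(3)] .
  have "(a, b, 0) \<in> edges (mg m B)" using assms(3-5) by (auto simp: matrix_graph_def zero_enat_def[symmetric])
  from iso_edge[OF 1(4) this] obtain e where "e \<in> edges E" by blast
  then have "move_equiv E G'" using iso_step[OF 1(2) 2(1) iso] move_equiv_step by blast
  then have "move_equiv G E'" using 1(5) 2(5) move_equiv_trans by blast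
  then show ?thesis unfolding MEQ_def using 1 2 by blast
qed

lemma mg_cong: "(\<And>a b. a < n \<Longrightarrow> b < n \<Longrightarrow> A a b = B a b) \<Longrightarrow> mg n A = mg n B"
  unfolding matrix_graph_def by auto


lemma esz_img_lt: "inj g \<Longrightarrow> esz (g ` {c. enat c < M}) = M"
  by (metis esz_image esz_lt inj_on_subset subset_UNIV)

lemma esz_img_lt_pos: "inj g \<Longrightarrow> esz (g ` {c. c \<noteq> 0 \<and> enat c < M}) = M - 1"
  by (metis esz_image esz_lt_pos inj_on_subset subset_UNIV)

lemma esz_img_lt_pos': "inj g \<Longrightarrow> esz (g ` {c. 0 < c \<and> enat c < M}) = M - 1"
  using esz_img_lt_pos[of g M] by (simp add: gr0_conv_Suc not_gr0)

lemma mO_edges: "e' \<in> edges (move_O (mg n A) v k p) \<longleftrightarrow>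
  (\<exists>x y c m. e' = ((x,y,c),m) \<and> x<n \<and> y<n \<and> enat c < A x y \<and> (if y = v then m < k else m = 0))"
  by (auto simp: move_O_def matrix_graph_def)

lemma mO_src: "src (move_O (mg n A) v k p) ((x,y,c),m) = (if x = v then (v, p (x,y,c)) else (x,0))"
  by (simp add: move_O_def matrix_graph_def)

lemma mO_rng: "rng (move_O (mg n A) v k p) ((x,y,c),m) = (if y = v then (v, m) else (y,0))"
  by (simp add: move_O_def matrix_graph_def)

lemma mO_verts: "verts (move_O (mg n A) v k p) = (\<lambda>w. (w,0)) ` ({..<n} - {v}) \<union> {(v,m)|m. m < k}"
  by (simp add: move_O_def matrix_graph_def)

lemma mg_count: "a < n \<Longrightarrow> b < n \<Longrightarrow> esz {e\<in>edges (mg n A). src (mg n A) e = a \<and> rng (mg n A) e = b} = A a b"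
proof -
  assume ab: "a < n" "b < n"
  have "{e\<in>edges (mg n A). src (mg n A) e = a \<and> rng (mg n A) e = b} = (\<lambda>c. (a,b,c)) ` {c. enat c < A a b}"
    using ab by (auto simp: matrix_graph_def)
  then show ?thesis by (simp add: esz_img_lt inj_on_def)
qed

lemma verts_mg[simp]: "verts (mg n A) = {..<n}"
  by (simp add: matrix_graph_def)

definition Bmat :: "nat \<Rightarrow> (nat \<Rightarrow> nat \<Rightarrow> enat) \<Rightarrow> nat \<Rightarrow> nat \<Rightarrow> nat \<Rightarrow> nat \<Rightarrow> enat" where
  "Bmat n A i j a b = (if a = n then (if b = i then 1 else 0) else if b = n then A a j
      else if a = j \<and> b = i then A j i - 1 else A a b)"

lemma step_O:
  fixes n i j :: nat and A :: "nat \<Rightarrow> nat \<Rightarrow> enat"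
  assumes "i < n" "j < n" "i \<noteq> j" "A j i \<noteq> 0" "A j j \<noteq> 0"
  shows "MEQ n A (Suc n) (Bmat n A i j)"
proof -
  define p where "p e = (if e = (j,i,0::nat) then 0 else (1::nat))" for e
  define \<phi> where "\<phi> w = (if w = (j,0::nat) then n else fst w)" for w
  have Aji: "enat 0 < A j i" "enat 0 < A j j" using assms(4,5) by (auto simp: zero_enat_def[symmetric])
  have em: "emits (mg n A) j = {(x,y,c). x = j \<and> y < n \<and> enat c < A j y}"
    using assms by (auto simp: emits_def matrix_graph_def)
  have part0: "{e\<in>emits (mg n A) j. p e = 0} = {(j,i,0)}" using Aji assms unfolding em p_def by auto
  have "(j,j,0) \<in> {e\<in>emits (mg n A) j. p e = 1}" using Aji assms unfolding em p_def by auto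
  then have part1: "{e\<in>emits (mg n A) j. p e = 1} \<noteq> {}" by blast
  have ok: "move_O_ok (mg n A) j 2 p"
    unfolding move_O_ok_def is_partition_def is_sink_def
  proof (intro conjI allI impI)
    show "j \<in> verts (mg n A)" using assms by simp
    show "emits (mg n A) j \<noteq> {}" using part0 by blast
    show "(1::nat) \<le> 2" by simp
    show "\<forall>e\<in>emits (mg n A) j. p e < 2" by (simp add: p_def)
    fix a assume "a < (2::nat)"
    then have "a = 0 \<or> a = 1" by auto
    then show "{e\<in>emits (mg n A) j. p e = a} \<noteq> {}" using part0 part1 by auto
  next
    fix a b :: nat assume "a < 2" "b < 2"
      "infinite {e\<in>emits (mg n A) j. p e = a} \<and> infinite {e\<in>emits (mg n A) j. p e = b}"
    then have "a \<noteq> 0" "b \<noteq> 0" using part0 by auto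
    then show "a = b" using \<open>a < 2\<close> \<open>b < 2\<close> by simp
  qed
  have wfO: "wf_graph (move_O (mg n A) j 2 p)" using wf_move_O[OF wf_mg ok] .
  have bij: "bij_betw \<phi> (verts (move_O (mg n A) j 2 p)) (verts (mg (Suc n) (Bmat n A i j)))"
    unfolding bij_betw_def mO_verts verts_mg
  proof
    show "inj_on \<phi> ((\<lambda>w. (w, 0)) ` ({..<n} - {j}) \<union> {(j, m) |m. m < 2})"
      using assms unfolding inj_on_def \<phi>_def by auto
    show "\<phi> ` ((\<lambda>w. (w, 0)) ` ({..<n} - {j}) \<union> {(j, m) |m. m < 2}) = {..<Suc n}"
    proof
      show "\<phi> ` ((\<lambda>w. (w, 0)) ` ({..<n} - {j}) \<union> {(j, m) |m. m < 2}) \<subseteq> {..<Suc n}"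
        using assms unfolding \<phi>_def by auto
      show "{..<Suc n} \<subseteq> \<phi> ` ((\<lambda>w. (w, 0)) ` ({..<n} - {j}) \<union> {(j, m) |m. m < 2})"
      proof
        fix b assume b: "b \<in> {..<Suc n}"
        consider "b = n" | "b = j" | "b < n" "b \<noteq> j" using b by force
        then show "b \<in> \<phi> ` ((\<lambda>w. (w, 0)) ` ({..<n} - {j}) \<union> {(j, m) |m. m < 2})"
        proof cases
          case 1 then show ?thesis unfolding \<phi>_def by (intro image_eqI[of _ _ "(j,0)"]) auto
        next
          case 2 then show ?thesis using assms unfolding \<phi>_def by (intro image_eqI[of _ _ "(j,1)"]) auto
        next
          case 3 then show ?thesis unfolding \<phi>_def by (intro image_eqI[of _ _ "(b,0)"]) auto
        qed
      qed
    qed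
  qed
  have cnt: "esz {e\<in>edges (move_O (mg n A) j 2 p). \<phi> (src (move_O (mg n A) j 2 p) e) = a \<and> \<phi> (rng (move_O (mg n A) j 2 p) e) = b}
      = esz {e\<in>edges (mg (Suc n) (Bmat n A i j)). src (mg (Suc n) (Bmat n A i j)) e = a \<and> rng (mg (Suc n) (Bmat n A i j)) e = b}"
    if a: "a \<in> verts (mg (Suc n) (Bmat n A i j))" and b: "b \<in> verts (mg (Suc n) (Bmat n A i j))" for a b
  proof -
    let ?S = "{e\<in>edges (move_O (mg n A) j 2 p). \<phi> (src (move_O (mg n A) j 2 p) e) = a \<and> \<phi> (rng (move_O (mg n A) j 2 p) e) = b}"
    have ab: "a < Suc n" "b < Suc n" using a b by auto
    have R: "esz {e\<in>edges (mg (Suc n) (Bmat n A i j)). src (mg (Suc n) (Bmat n A i j)) e = a \<and> rng (mg (Suc n) (Bmat n A i j)) e = b} = Bmat n A i j a b"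
      using mg_count ab by blast
    have mem: "((x,y,c),m) \<in> ?S \<longleftrightarrow> x<n \<and> y<n \<and> enat c < A x y \<and> (if y = j then m < 2 else m = 0) \<and>
       (if (x,y,c) = (j,i,0) then n else x) = a \<and> (if y = j then (if m = 0 then n else j) else y) = b" for x y c m
    proof -
      have e1: "((x,y,c),m) \<in> edges (move_O (mg n A) j 2 p) \<longleftrightarrow> x<n \<and> y<n \<and> enat c < A x y \<and> (if y = j then m < 2 else m = 0)"
        unfolding mO_edges by blast
      have e2: "\<phi> (src (move_O (mg n A) j 2 p) ((x,y,c),m)) = (if (x,y,c) = (j,i,0) then n else x)"
        unfolding mO_src \<phi>_def p_def using assms by (cases "x = j") auto
      have e3: "\<phi> (rng (move_O (mg n A) j 2 p) ((x,y,c),m)) = (if y = j then (if m = 0 then n else j) else y)"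
        unfolding mO_rng \<phi>_def by (cases "y = j") auto
      show ?thesis using e1 e2 e3 by simp
    qed
    have S: "?S = {((x,y,c),m). x<n \<and> y<n \<and> enat c < A x y \<and> (if y = j then m < 2 else m = 0) \<and>
       (if (x,y,c) = (j,i,0) then n else x) = a \<and> (if y = j then (if m = 0 then n else j) else y) = b}"
      (is "_ = ?T")
    proof (rule set_eqI)
      fix e' :: "(nat \<times> nat \<times> nat) \<times> nat"
      obtain x y c m where e': "e' = ((x,y,c),m)" by (metis prod.exhaust)
      show "e' \<in> ?S \<longleftrightarrow> e' \<in> ?T" unfolding e' using mem[of x y c m] by simp
    qed
    consider "a = n" "b = i" | "a = n" "b \<noteq> i" | "a < n" "b = n" | "a < n" "b = j"
      | "a = j" "b = i" | "a < n" "b < n" "b \<noteq> j" "\<not> (a = j \<and> b = i)"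
      using ab assms by force
    then show ?thesis
    proof cases
      case 1
      have T: "?T = {((j,i,0),0)}" using 1 assms Aji by (auto split: if_splits)
      show ?thesis unfolding S T R using 1 assms by (simp add: Bmat_def)
    next
      case 2
      have T: "?T = {}" using 2 assms by (auto split: if_splits)
      show ?thesis unfolding S T R using 2 assms by (simp add: Bmat_def)
    next
      case 3
      have T: "?T = (\<lambda>c. ((a,j,c),0)) ` {c. enat c < A a j}" using 3 assms by (auto split: if_splits)
      show ?thesis unfolding S T R using 3 assms by (simp add: Bmat_def esz_img_lt inj_on_def)
    next
      case 4
      have T: "?T = (\<lambda>c. ((a,j,c),1)) ` {c. enat c < A a j}" using 4 assms by (auto split: if_splits)
      show ?thesis unfolding S T R using 4 assms by (simp add: Bmat_def esz_img_lt inj_on_def)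
    next
      case 5
      have T: "?T = (\<lambda>c. ((j,i,c),0)) ` {c. c \<noteq> 0 \<and> enat c < A j i}" using 5 assms by (auto split: if_splits)
      show ?thesis unfolding S T R using 5 assms by (simp add: Bmat_def esz_img_lt_pos esz_img_lt_pos' inj_on_def)
    next
      case 6
      have T: "?T = (\<lambda>c. ((a,b,c),0)) ` {c. enat c < A a b}" using 6 assms by (auto split: if_splits)
      show ?thesis unfolding S T R using 6 assms by (auto simp: Bmat_def esz_img_lt inj_on_def)
    qed
  qed
  have "graph_iso (move_O (mg n A) j 2 p) (mg (Suc n) (Bmat n A i j))"
    using iso_by_counts[OF wfO wf_mg bij cnt] by blast
  then show ?thesis using MEQ_O[OF ok] by blast
qed


lemma mg_edge_iff: "(x,y,c) \<in> edges (mg n A) \<longleftrightarrow> x<n \<and> y<n \<and> enat c < A x y"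
  by (simp add: matrix_graph_def)

lemma mg_sr: "src (mg n A) (x,y,c) = x" "rng (mg n A) (x,y,c) = y"
  by (simp_all add: matrix_graph_def)

lemma R_last:
  fixes B :: "nat \<Rightarrow> nat \<Rightarrow> enat"
  assumes t: "t < K" and v: "v < K" and row: "\<forall>b<Suc K. B K b = (if b = t then 1 else 0)"
    and col: "\<forall>x<K. x \<noteq> v \<longrightarrow> B x K = 0"
  shows "MEQ (Suc K) B K (\<lambda>a b. B a b + (if a = v \<and> b = t then B v K else 0))"
proof -
  let ?G = "mg (Suc K) B"
  let ?f = "(K, t, 0::nat)"
  let ?C = "\<lambda>a b. B a b + (if a = v \<and> b = t then B v K else 0)"
  have BKK: "B K K = 0" using row t by auto
  have em: "emits ?G K = {?f}"
  proof -
    have "enat c < B K y \<and> y < Suc K \<longleftrightarrow> y = t \<and> c = 0" for y c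
    proof -
      have "B K t = 1" "\<And>y. y < Suc K \<Longrightarrow> y \<noteq> t \<Longrightarrow> B K y = 0" using row t by auto
      then show ?thesis using t by (cases "y = t") (auto simp: one_enat_def zero_enat_def)
    qed
    then show ?thesis by (auto simp: emits_def matrix_graph_def)
  qed
  have rec: "receives ?G K = (\<lambda>c. (v, K, c)) ` {c. enat c < B v K}"
  proof -
    have "enat c < B x K \<and> x < Suc K \<longleftrightarrow> x = v \<and> enat c < B v K" for x c
      using col BKK v by (cases "x = K"; cases "x = v") (auto simp: zero_enat_def[symmetric] less_Suc_eq)
    then show ?thesis by (auto simp: receives_def matrix_graph_def)
  qed
  have ok: "move_R_ok ?G K ?f v"
    unfolding move_R_ok_def is_regular_def em rec using t v by (auto simp: matrix_graph_def)
  have wfR: "wf_graph (move_R ?G K ?f v)" using wf_move_R[OF wf_mg ok] .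
  have V: "verts (move_R ?G K ?f v) = {..<K}" by (auto simp: move_R_def)
  have bij: "bij_betw id (verts (move_R ?G K ?f v)) (verts (mg K ?C))" unfolding V by simp
  have cnt: "esz {e\<in>edges (move_R ?G K ?f v). id (src (move_R ?G K ?f v) e) = a \<and> id (rng (move_R ?G K ?f v) e) = b}
      = esz {e\<in>edges (mg K ?C). src (mg K ?C) e = a \<and> rng (mg K ?C) e = b}"
    if a: "a \<in> verts (mg K ?C)" and b: "b \<in> verts (mg K ?C)" for a b
  proof -
    have ab: "a < K" "b < K" using a b by auto
    have R: "esz {e\<in>edges (mg K ?C). src (mg K ?C) e = a \<and> rng (mg K ?C) e = b} = ?C a b"
      using mg_count ab by blast
    have S: "{e\<in>edges (move_R ?G K ?f v). id (src (move_R ?G K ?f v) e) = a \<and> id (rng (move_R ?G K ?f v) e) = b}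
       = (\<lambda>c. Inl (a,b,c)) ` {c. enat c < B a b} \<union> (if a = v \<and> b = t then (\<lambda>c. Inr (v,K,c)) ` {c. enat c < B v K} else {})"
      (is "?S = ?T")
    proof (rule set_eqI)
      fix x show "x \<in> ?S \<longleftrightarrow> x \<in> ?T"
      proof (cases x)
        case (Inl e)
        obtain x' y' c' where e: "e = (x',y',c')" by (metis prod.exhaust)
        show ?thesis using ab unfolding Inl e by (auto simp: move_R_def rec mg_edge_iff mg_sr)
      next
        case (Inr e)
        obtain x' y' c' where e: "e = (x',y',c')" by (metis prod.exhaust)
        show ?thesis using ab unfolding Inr e by (auto simp: move_R_def rec mg_edge_iff mg_sr)
      qed
    qed
    have dj: "(\<lambda>c. Inl (a,b,c)) ` X \<inter> (\<lambda>c. Inr (v,K,c)) ` Y = {}" for X Y :: "nat set" by auto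
    have "esz ?T = ?C a b"
    proof (cases "a = v \<and> b = t")
      case True
      have TT: "?T = (\<lambda>c. Inl (a,b,c)) ` {c. enat c < B a b} \<union> (\<lambda>c. Inr (v,K,c)) ` {c. enat c < B v K}"
        using True by simp
      show ?thesis unfolding TT esz_Un[OF dj] using True by (simp add: esz_img_lt inj_on_def)
    next
      case False
      then have TT: "?T = (\<lambda>c. Inl (a,b,c)) ` {c. enat c < B a b}" by auto
      show ?thesis unfolding TT using False by (auto simp: esz_img_lt inj_on_def)
    qed
    then show ?thesis using R S by simp
  qed
  have "graph_iso (move_R ?G K ?f v) (mg K ?C)"
    using iso_by_counts[OF wfR wf_mg bij cnt] by blast
  then show ?thesis using MEQ_R[OF ok] by blast
qed

definition Dmat :: "nat \<Rightarrow> (nat \<Rightarrow> nat \<Rightarrow> enat) \<Rightarrow> nat \<Rightarrow> nat \<Rightarrow> nat \<Rightarrow> nat \<Rightarrow> enat" where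
  "Dmat N B i x0 a b = (if N \<le> a then (if b = i then 1 else 0)
     else if b = Suc N then (if a = x0 then B a N else 0)
     else if b = N then (if a = x0 then 0 else B a N) else B a b)"

lemma mI_edges: "e' \<in> edges (move_I (mg n A) v k p) \<longleftrightarrow>
  (\<exists>x y c m. e' = ((x,y,c),m) \<and> x<n \<and> y<n \<and> enat c < A x y \<and> (if x = v then m < k else m = 0))"
  by (auto simp: move_I_def matrix_graph_def)

lemma mI_src: "src (move_I (mg n A) v k p) ((x,y,c),m) = (if x = v then (v, m) else (x,0))"
  by (simp add: move_I_def matrix_graph_def)

lemma mI_rng: "rng (move_I (mg n A) v k p) ((x,y,c),m) = (if y = v then (v, p (x,y,c)) else (y,0))"
  by (simp add: move_I_def matrix_graph_def)

lemma mI_verts: "verts (move_I (mg n A) v k p) = (\<lambda>w. (w,0)) ` ({..<n} - {v}) \<union> {(v,m)|m. m < k}"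
  by (simp add: move_I_def matrix_graph_def)

lemma step_I:
  fixes B :: "nat \<Rightarrow> nat \<Rightarrow> enat"
  assumes i: "i < N" and row: "\<forall>b<Suc N. B N b = (if b = i then 1 else 0)"
    and xa: "xa < N" "B xa N \<noteq> 0" and xb: "xb < N" "xb \<noteq> xa" "B xb N \<noteq> 0"
  shows "MEQ (Suc N) B (Suc (Suc N)) (Dmat N B i xa)"
proof -
  let ?G = "mg (Suc N) B"
  let ?D = "Dmat N B i xa"
  define q where "q e = (if fst e = xa then 1 else (0::nat))" for e :: "nat \<times> nat \<times> nat"
  define \<phi> where "\<phi> w = (if w = (N,1::nat) then Suc N else fst w)" for w
  have BNy: "enat c < B N y \<and> y < Suc N \<longleftrightarrow> y = i \<and> c = 0" for y c
  proof -
    have "B N i = 1" "\<And>y. y < Suc N \<Longrightarrow> y \<noteq> i \<Longrightarrow> B N y = 0" using row i by auto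
    then show ?thesis using i by (cases "y = i") (auto simp: one_enat_def zero_enat_def)
  qed
  have BNN: "B N N = 0" using row i by auto
  have em: "emits ?G N = {(N,i,0)}"
    using BNy by (auto simp: emits_def matrix_graph_def)
  have e0: "(xa,N,0) \<in> receives ?G N" "(xb,N,0) \<in> receives ?G N"
    using xa xb by (auto simp: receives_def matrix_graph_def zero_enat_def[symmetric])
  have ok: "move_I_ok ?G N 2 q"
    unfolding move_I_ok_def is_partition_def is_regular_def is_source_def em
  proof (intro conjI allI impI)
    show "N \<in> verts ?G" by simp
    show "{(N, i, 0)} \<noteq> {}" "finite {(N, i, 0::nat)}" by auto
    show "receives ?G N \<noteq> {}" using e0 by blast
    show "(1::nat) \<le> 2" by simp
    show "\<forall>e\<in>receives ?G N. q e < 2" by (simp add: q_def)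
    fix a :: nat assume "a < 2"
    then have "a = 0 \<or> a = 1" by auto
    then show "{e\<in>receives ?G N. q e = a} \<noteq> {}"
      using e0 xb unfolding q_def by (auto intro!: exI[of _ "(xb,N,0)"] exI[of _ "(xa,N,0)"])
  qed
  have wfI: "wf_graph (move_I ?G N 2 q)" using wf_move_I[OF wf_mg ok] .
  have bij: "bij_betw \<phi> (verts (move_I ?G N 2 q)) (verts (mg (Suc (Suc N)) ?D))"
    unfolding bij_betw_def mI_verts verts_mg
  proof
    show "inj_on \<phi> ((\<lambda>w. (w, 0)) ` ({..<Suc N} - {N}) \<union> {(N, m) |m. m < 2})"
      unfolding inj_on_def \<phi>_def by auto
    show "\<phi> ` ((\<lambda>w. (w, 0)) ` ({..<Suc N} - {N}) \<union> {(N, m) |m. m < 2}) = {..<Suc (Suc N)}"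
    proof
      show "\<phi> ` ((\<lambda>w. (w, 0)) ` ({..<Suc N} - {N}) \<union> {(N, m) |m. m < 2}) \<subseteq> {..<Suc (Suc N)}"
        unfolding \<phi>_def by auto
      show "{..<Suc (Suc N)} \<subseteq> \<phi> ` ((\<lambda>w. (w, 0)) ` ({..<Suc N} - {N}) \<union> {(N, m) |m. m < 2})"
      proof
        fix b assume b: "b \<in> {..<Suc (Suc N)}"
        consider "b = Suc N" | "b = N" | "b < N" using b by force
        then show "b \<in> \<phi> ` ((\<lambda>w. (w, 0)) ` ({..<Suc N} - {N}) \<union> {(N, m) |m. m < 2})"
        proof cases
          case 1 then show ?thesis unfolding \<phi>_def by (intro image_eqI[of _ _ "(N,1)"]) auto
        next
          case 2 then show ?thesis unfolding \<phi>_def by (intro image_eqI[of _ _ "(N,0)"]) auto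
        next
          case 3 then show ?thesis unfolding \<phi>_def by (intro image_eqI[of _ _ "(b,0)"]) auto
        qed
      qed
    qed
  qed
  have cnt: "esz {e\<in>edges (move_I ?G N 2 q). \<phi> (src (move_I ?G N 2 q) e) = a \<and> \<phi> (rng (move_I ?G N 2 q) e) = b}
      = esz {e\<in>edges (mg (Suc (Suc N)) ?D). src (mg (Suc (Suc N)) ?D) e = a \<and> rng (mg (Suc (Suc N)) ?D) e = b}"
    if a: "a \<in> verts (mg (Suc (Suc N)) ?D)" and b: "b \<in> verts (mg (Suc (Suc N)) ?D)" for a b
  proof -
    let ?S = "{e\<in>edges (move_I ?G N 2 q). \<phi> (src (move_I ?G N 2 q) e) = a \<and> \<phi> (rng (move_I ?G N 2 q) e) = b}"
    have ab: "a < Suc (Suc N)" "b < Suc (Suc N)" using a b by auto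
    have R: "esz {e\<in>edges (mg (Suc (Suc N)) ?D). src (mg (Suc (Suc N)) ?D) e = a \<and> rng (mg (Suc (Suc N)) ?D) e = b} = ?D a b"
      using mg_count ab by blast
    have mem: "((x,y,c),m) \<in> ?S \<longleftrightarrow> x<Suc N \<and> y<Suc N \<and> enat c < B x y \<and> (if x = N then m < 2 else m = 0) \<and>
       (if x = N then N + m else x) = a \<and> (if y = N then (if x = xa then Suc N else N) else y) = b" for x y c m
    proof -
      have e1: "((x,y,c),m) \<in> edges (move_I ?G N 2 q) \<longleftrightarrow> x<Suc N \<and> y<Suc N \<and> enat c < B x y \<and> (if x = N then m < 2 else m = 0)"
        unfolding mI_edges by blast
      have e2: "(if x = N then m < 2 else m = 0) \<Longrightarrow> \<phi> (src (move_I ?G N 2 q) ((x,y,c),m)) = (if x = N then N + m else x)"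
        unfolding mI_src \<phi>_def by (cases "x = N") auto
      have e3: "\<phi> (rng (move_I ?G N 2 q) ((x,y,c),m)) = (if y = N then (if x = xa then Suc N else N) else y)"
        unfolding mI_rng \<phi>_def q_def by (cases "y = N") auto
      show ?thesis using e1 e2 e3 by auto
    qed
    have S: "?S = {((x,y,c),m). x<Suc N \<and> y<Suc N \<and> enat c < B x y \<and> (if x = N then m < 2 else m = 0) \<and>
       (if x = N then N + m else x) = a \<and> (if y = N then (if x = xa then Suc N else N) else y) = b}"
      (is "_ = ?T")
    proof (rule set_eqI)
      fix e' :: "(nat \<times> nat \<times> nat) \<times> nat"
      obtain x y c m where e': "e' = ((x,y,c),m)" by (metis prod.exhaust)
      show "e' \<in> ?S \<longleftrightarrow> e' \<in> ?T" unfolding e' using mem[of x y c m] by simp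
    qed
    consider "N \<le> a" "b = i" | "N \<le> a" "b \<noteq> i" | "a < N" "b = Suc N" "a = xa"
      | "a < N" "b = Suc N" "a \<noteq> xa" | "a < N" "b = N" "a = xa" | "a < N" "b = N" "a \<noteq> xa"
      | "a < N" "b < N"
      using ab by (cases "N \<le> a"; cases "b = i"; cases "b = Suc N"; cases "b = N"; cases "a = xa") auto
    then show ?thesis
    proof cases
      case 1
      have T: "?T = {((N,i,0),a - N)}" using 1 ab BNy BNN i xa by (auto split: if_splits)
      show ?thesis unfolding S T R using 1 assms by (simp add: Dmat_def)
    next
      case 2
      have T: "?T = {}" using 2 ab BNy BNN i xa by (auto split: if_splits)
      show ?thesis unfolding S T R using 2 assms by (simp add: Dmat_def)
    next
      case 3
      have T: "?T = (\<lambda>c. ((xa,N,c),0)) ` {c. enat c < B xa N}" using 3 ab BNy BNN i xa by (auto split: if_splits)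
      show ?thesis unfolding S T R using 3 assms by (simp add: Dmat_def esz_img_lt inj_on_def)
    next
      case 4
      have T: "?T = {}" using 4 ab BNy BNN i xa by (auto split: if_splits)
      show ?thesis unfolding S T R using 4 assms by (simp add: Dmat_def)
    next
      case 5
      have T: "?T = {}" using 5 ab BNy BNN i xa by (auto split: if_splits)
      show ?thesis unfolding S T R using 5 assms by (simp add: Dmat_def)
    next
      case 6
      have T: "?T = (\<lambda>c. ((a,N,c),0)) ` {c. enat c < B a N}" using 6 ab BNy BNN i xa by (auto split: if_splits)
      show ?thesis unfolding S T R using 6 assms by (simp add: Dmat_def esz_img_lt inj_on_def)
    next
      case 7
      have T: "?T = (\<lambda>c. ((a,b,c),0)) ` {c. enat c < B a b}" using 7 ab BNy BNN i xa by (auto split: if_splits)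
      show ?thesis unfolding S T R using 7 assms by (simp add: Dmat_def esz_img_lt inj_on_def)
    qed
  qed
  have "graph_iso (move_I ?G N 2 q) (mg (Suc (Suc N)) ?D)"
    using iso_by_counts[OF wfI wf_mg bij cnt] by blast
  then show ?thesis using MEQ_I[OF ok] by blast
qed


lemma enat_sub1_add: "(x::enat) \<noteq> 0 \<Longrightarrow> (x - 1) + y = x + y - 1"
  by (cases x; cases y) (auto simp: one_enat_def zero_enat_def)

lemma enat_le_add_sub1: "(y::enat) \<noteq> 0 \<Longrightarrow> x \<le> x + y - 1"
  by (cases x; cases y) (auto simp: one_enat_def zero_enat_def)

lemma elim:
  fixes N i :: nat
  assumes "i < N"
  shows "\<forall>B. (\<forall>b<Suc N. B N b = (if b = i then 1 else 0)) \<longrightarrow> B i i \<noteq> 0 \<longrightarrow>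
    card {x. x < N \<and> B x N \<noteq> 0} = Suc k \<longrightarrow>
    MEQ (Suc N) B N (\<lambda>a b. B a b + (if b = i then B a N else 0))"
proof (induction k)
  case 0
  show ?case
  proof (intro allI impI)
    fix B :: "nat \<Rightarrow> nat \<Rightarrow> enat"
    assume row: "\<forall>b<Suc N. B N b = (if b = i then 1 else 0)" and "B i i \<noteq> 0"
      and c: "card {x. x < N \<and> B x N \<noteq> 0} = Suc 0"
    from c have "card {x. x < N \<and> B x N \<noteq> 0} = 1" by simp
    then obtain x0 where x0: "{x. x < N \<and> B x N \<noteq> 0} = {x0}" by (rule card_1_singletonE)
    then have "x0 < N" "\<forall>x<N. x \<noteq> x0 \<longrightarrow> B x N = 0" by auto
    from R_last[OF assms this(1) row this(2)]
    have "MEQ (Suc N) B N (\<lambda>a b. B a b + (if a = x0 \<and> b = i then B x0 N else 0))" .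
    moreover have "mg N (\<lambda>a b. B a b + (if a = x0 \<and> b = i then B x0 N else 0)) = mg N (\<lambda>a b. B a b + (if b = i then B a N else 0))"
      by (rule mg_cong) (use \<open>\<forall>x<N. x \<noteq> x0 \<longrightarrow> B x N = 0\<close> in auto)
    ultimately show "MEQ (Suc N) B N (\<lambda>a b. B a b + (if b = i then B a N else 0))"
      unfolding MEQ_def by simp
  qed
next
  case (Suc k)
  show ?case
  proof (intro allI impI)
    fix B :: "nat \<Rightarrow> nat \<Rightarrow> enat"
    assume row: "\<forall>b<Suc N. B N b = (if b = i then 1 else 0)" and Bii: "B i i \<noteq> 0"
      and c: "card {x. x < N \<and> B x N \<noteq> 0} = Suc (Suc k)"
    let ?S = "{x. x < N \<and> B x N \<noteq> 0}"
    obtain x0 where x0: "x0 \<in> ?S" using c by (metis card.empty ex_in_conv nat.distinct(1))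
    have "card (?S - {x0}) = Suc k" using c x0 by simp
    then obtain x1 where x1: "x1 \<in> ?S - {x0}" by (metis card.empty ex_in_conv nat.distinct(1))
    let ?D = "Dmat N B i x0"
    have 1: "MEQ (Suc N) B (Suc (Suc N)) ?D"
      using step_I[where B=B and N=N and i=i and xa=x0 and xb=x1] assms row x0 x1 by auto
    have rowD: "\<forall>b<Suc (Suc N). ?D (Suc N) b = (if b = i then 1 else 0)" by (simp add: Dmat_def)
    have colD: "\<forall>x<Suc N. x \<noteq> x0 \<longrightarrow> ?D x (Suc N) = 0" using assms by (auto simp: Dmat_def)
    define B' where "B' = (\<lambda>a b. ?D a b + (if a = x0 \<and> b = i then ?D x0 (Suc N) else 0))"
    have 2: "MEQ (Suc (Suc N)) ?D (Suc N) B'"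
      unfolding B'_def using R_last[where B="?D" and K="Suc N" and t=i and v=x0] rowD colD assms x0 by auto
    have rowB': "\<forall>b<Suc N. B' N b = (if b = i then 1 else 0)"
      using x0 by (simp add: B'_def Dmat_def)
    have B'ii: "B' i i \<noteq> 0" using Bii assms by (simp add: B'_def Dmat_def)
    have "{x. x < N \<and> B' x N \<noteq> 0} = ?S - {x0}"
      using assms by (auto simp: B'_def Dmat_def)
    then have "card {x. x < N \<and> B' x N \<noteq> 0} = Suc k" using \<open>card (?S - {x0}) = Suc k\<close> by simp
    then have 3: "MEQ (Suc N) B' N (\<lambda>a b. B' a b + (if b = i then B' a N else 0))"
      using Suc.IH rowB' B'ii by blast
    have "mg N (\<lambda>a b. B' a b + (if b = i then B' a N else 0)) = mg N (\<lambda>a b. B a b + (if b = i then B a N else 0))"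
    proof (rule mg_cong)
      fix a b assume "a < N" "b < N"
      then show "B' a b + (if b = i then B' a N else 0) = B a b + (if b = i then B a N else 0)"
        using x0 by (auto simp: B'_def Dmat_def add.commute)
    qed
    with 3 have 4: "MEQ (Suc N) B' N (\<lambda>a b. B a b + (if b = i then B a N else 0))"
      unfolding MEQ_def by simp
    have Dii: "?D i i \<noteq> 0" using Bii assms by (simp add: Dmat_def)
    have "MEQ (Suc N) B (Suc N) B'" using MEQ_trans[OF 1 2, where a=i and b=i] Dii assms by simp
    then show "MEQ (Suc N) B N (\<lambda>a b. B a b + (if b = i then B a N else 0))"
      using MEQ_trans[OF _ 4, where a=i and b=i] B'ii assms by simp
  qed
qed

lemma irr_mono:
  assumes "\<And>a b. a < m \<Longrightarrow> b < m \<Longrightarrow> A a b \<le> A' a b" "irreducible_mat m A"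
  shows "irreducible_mat m A'"
proof -
  let ?R = "\<lambda>a b. \<exists>e\<in>edges (mg m A). src (mg m A) e = a \<and> rng (mg m A) e = b"
  let ?R' = "\<lambda>a b. \<exists>e\<in>edges (mg m A'). src (mg m A') e = a \<and> rng (mg m A') e = b"
  have "?R x y \<Longrightarrow> ?R' x y" for x y
  proof -
    assume "?R x y"
    then obtain c where "x < m" "y < m" "enat c < A x y" by (auto simp: matrix_graph_def)
    moreover then have "enat c < A' x y" using assms(1) order_less_le_trans by blast
    ultimately show "?R' x y" by (auto simp: matrix_graph_def intro!: bexI[of _ "(x,y,c)"])
  qed
  then have "?R \<le> ?R'" by blast
  then have le: "?R\<^sup>*\<^sup>* \<le> ?R'\<^sup>*\<^sup>*" by (rule rtranclp_mono)
  show ?thesis using assms(2) le unfolding irreducible_mat_def strongly_connected_def verts_mg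
    by (auto dest: predicate2D)
qed


theorem lemma7p2:
  fixes n i j :: nat and A :: "nat \<Rightarrow> nat \<Rightarrow> enat"
  assumes "\<forall>k<n. A k k \<noteq> 0"
    and "i < n" and "j < n" and "i \<noteq> j"
    and "A j i \<noteq> 0"
  shows "mat_move_equiv n A (col_op A i j) \<and>
         (\<forall>k<n. col_op A i j k k \<noteq> 0) \<and>
         (irreducible_mat n A \<longrightarrow> irreducible_mat n (col_op A i j)) \<and>
         (\<forall>m\<le>n. irreducible_mat m A \<longrightarrow> irreducible_mat m (col_op A i j))"
proof -
  have Aii: "A i i \<noteq> 0" and Ajj: "A j j \<noteq> 0" using assms by auto
  have diag: "\<forall>k<n. col_op A i j k k \<noteq> 0"
    using assms by (auto simp: col_op_def)
  have mono: "A a b \<le> col_op A i j a b" if "a < n" "b < n" for a b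
  proof (cases "b = i")
    case True
    show ?thesis
    proof (cases "a = j")
      case True
      then show ?thesis using \<open>b = i\<close> enat_le_add_sub1[OF Ajj] by (simp add: col_op_def)
    next
      case False
      then show ?thesis using \<open>b = i\<close> by (simp add: col_op_def)
    qed
  next
    case False
    then show ?thesis by (simp add: col_op_def)
  qed
  have irr: "\<forall>m\<le>n. irreducible_mat m A \<longrightarrow> irreducible_mat m (col_op A i j)"
  proof (intro allI impI)
    fix m assume m: "m \<le> n" and irrA: "irreducible_mat m A"
    show "irreducible_mat m (col_op A i j)"
    proof (rule irr_mono[OF _ irrA])
      fix a b assume "a < m" "b < m"
      then show "A a b \<le> col_op A i j a b" using mono m by simp
    qed
  qed
  let ?B = "Bmat n A i j"
  have 1: "MEQ n A (Suc n) ?B" using step_O assms Ajj by blast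
  have row: "\<forall>b<Suc n. ?B n b = (if b = i then 1 else 0)" by (simp add: Bmat_def)
  have Bii: "?B i i \<noteq> 0" using assms Aii by (simp add: Bmat_def)
  have "j \<in> {x. x < n \<and> ?B x n \<noteq> 0}" using assms Ajj by (simp add: Bmat_def)
  then have "card {x. x < n \<and> ?B x n \<noteq> 0} > 0" by (metis (no_types, lifting) card_gt_0_iff empty_iff finite_nat_set_iff_bounded mem_Collect_eq)
  then obtain k where "card {x. x < n \<and> ?B x n \<noteq> 0} = Suc k" using gr0_implies_Suc by blast
  then have 2: "MEQ (Suc n) ?B n (\<lambda>a b. ?B a b + (if b = i then ?B a n else 0))"
    using elim[OF assms(2), of k] row Bii by blast
  have 3: "MEQ n A n (\<lambda>a b. ?B a b + (if b = i then ?B a n else 0))"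
    using MEQ_trans[OF 1 2, where a=i and b=i] Bii assms by simp
  have "mg n (\<lambda>a b. ?B a b + (if b = i then ?B a n else 0)) = mg n (col_op A i j)"
  proof (rule mg_cong)
    fix a b assume ab: "a < n" "b < n"
    show "?B a b + (if b = i then ?B a n else 0) = col_op A i j a b"
      using ab assms enat_sub1_add[OF assms(5)] by (auto simp: Bmat_def col_op_def)
  qed
  with 3 have "MEQ n A n (col_op A i j)" unfolding MEQ_def by simp
  then have "mat_move_equiv n A (col_op A i j)" unfolding MEQ_def mat_move_equiv_def by simp
  then show ?thesis using diag irr by blast
qed

end
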